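(* Let $\mathbb{R}^n$ be equipped with an arbitrary norm $\|\cdot\|$, let $g:\mathbb{R}^n\to\mathbb{R}^n$, $y\in\mathbb{R}^n$, $\rho>0$, $L\ge0$, $\mu>0$, and $B=\{x\in\mathbb{R}^n:\|x\|\le\rho\}$. Assume $g(0)=0$, $g$ is differentiable in $B$ with $\|g'(x^a)-g'(x^b)\|\le L\|x^a-x^b\|$ for all $x^a,x^b\in B$, that for every $x\in B$ the matrix $g'(x)$ is invertible with $\|g'(x)^{-1}\|\le \frac1\mu$, and that $\|y\|<\mu\rho$. Then there exists a solution $x^*$ of $g(x)=y$ with $\|x^*\|\le\frac{\|y\|}{\mu}$.
   Context: Matrix norms are operator norms subordinate to the chosen vector norm. *)

theory Defs
  imports "HOL-Analysis.Analysis"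
begin

text \<open>An arbitrary norm on a real vector space (not necessarily the built-in Euclidean one).\<close>
definition is_norm :: "('a::real_vector \<Rightarrow> real) \<Rightarrow> bool" where
  "is_norm N \<longleftrightarrow>
     (\<forall>x. 0 \<le> N x) \<and> (\<forall>x. N x = 0 \<longleftrightarrow> x = 0) \<and>
     (\<forall>c x. N (c *\<^sub>R x) = \<bar>c\<bar> * N x) \<and> (\<forall>x y. N (x + y) \<le> N x + N y)"

definition opnorm :: "(real^'n \<Rightarrow> real) \<Rightarrow> real^'n^'n \<Rightarrow> real" where
  "opnorm N A = Sup {N (A *v x) | x. N x \<le> 1}"

end

theory Submission
  imports Defs
begin

lemma N_ge0: "is_norm N \<Longrightarrow> 0 \<le> N x"
  unfolding is_norm_def by blast
lemma N_zero: "is_norm N \<Longrightarrow> N x = 0 \<longleftrightarrow> x = 0"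
  unfolding is_norm_def by blast
lemma N_scale: "is_norm N \<Longrightarrow> N (c *\<^sub>R x) = \<bar>c\<bar> * N x"
  unfolding is_norm_def by blast
lemma N_tri: "is_norm N \<Longrightarrow> N (x + y) \<le> N x + N y"
  unfolding is_norm_def by blast
lemma N_neg: "is_norm N \<Longrightarrow> N (- x) = N x"
  using N_scale[of N "-1" x] by simp
lemma N_diff_tri: "is_norm N \<Longrightarrow> N (x - y) \<le> N x + N y"
  using N_tri[of N x "-y"] N_neg[of N y] by simp
lemma N_commute: "is_norm N \<Longrightarrow> N (x - y) = N (y - x)"
  using N_neg[of N "y - x"] by simp
lemma N_rev: "is_norm N \<Longrightarrow> \<bar>N x - N y\<bar> \<le> N (x - y)"
proof -
  assume n: "is_norm N"
  have "N x \<le> N (x - y) + N y" using N_tri[OF n, of "x - y" y] by simp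
  moreover have "N y \<le> N (y - x) + N x" using N_tri[OF n, of "y - x" x] by simp
  ultimately show ?thesis using N_commute[OF n, of x y] by linarith
qed
lemma N_sum: assumes "is_norm N" "finite S" shows "N (sum f S) \<le> (\<Sum>i\<in>S. N (f i))"
  using assms(2)
proof (induction S rule: finite_induct)
  case empty then show ?case using N_zero[OF assms(1), of 0] by simp
next
  case (insert a S)
  then show ?case using N_tri[OF assms(1), of "f a" "sum f S"] by simp
qed

lemma N_upper:
  fixes N :: "real^'n \<Rightarrow> real"
  assumes n: "is_norm N"
  shows "\<exists>c>0. \<forall>x. N x \<le> c * norm x"
proof -
  define c where "c = 1 + (\<Sum>i\<in>UNIV. N (axis i (1::real) :: real^'n))"
  have s0: "0 \<le> (\<Sum>i\<in>UNIV. N (axis i (1::real) :: real^'n))"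
    by (rule sum_nonneg) (simp add: N_ge0[OF n])
  have "N x \<le> c * norm x" for x
  proof -
    have "N x = N (\<Sum>i\<in>UNIV. (x$i) *\<^sub>R (axis i 1 :: real^'n))"
      using basis_expansion[of x] by (simp add: scalar_mult_eq_scaleR)
    also have "\<dots> \<le> (\<Sum>i\<in>UNIV. N ((x$i) *\<^sub>R (axis i 1 :: real^'n)))"
      by (rule N_sum[OF n]) simp
    also have "\<dots> = (\<Sum>i\<in>UNIV. \<bar>x$i\<bar> * N (axis i 1 :: real^'n))"
      by (simp add: N_scale[OF n])
    also have "\<dots> \<le> (\<Sum>i\<in>UNIV. norm x * N (axis i 1 :: real^'n))"
      by (rule sum_mono) (simp add: mult_right_mono component_le_norm_cart N_ge0[OF n])
    also have "\<dots> = norm x * (\<Sum>i\<in>UNIV. N (axis i (1::real) :: real^'n))"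
      by (simp add: sum_distrib_left)
    also have "\<dots> \<le> c * norm x" unfolding c_def by (simp add: algebra_simps)
    finally show ?thesis .
  qed
  moreover have "c > 0" using s0 unfolding c_def by linarith
  ultimately show ?thesis by blast
qed

lemma N_cont:
  fixes N :: "real^'n \<Rightarrow> real"
  assumes n: "is_norm N"
  shows "continuous_on S N"
proof -
  obtain c where c: "c > 0" "\<And>x. N x \<le> c * norm x" using N_upper[OF n] by blast
  have "c-lipschitz_on S N"
  proof (rule lipschitz_onI)
    fix x y
    have "dist (N x) (N y) \<le> N (x - y)" using N_rev[OF n, of x y] by (simp add: dist_real_def)
    also have "\<dots> \<le> c * dist x y" using c(2)[of "x - y"] by (simp add: dist_norm)
    finally show "dist (N x) (N y) \<le> c * dist x y" .
  qed (use c in simp)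
  then show ?thesis by (rule lipschitz_on_continuous_on)
qed

lemma N_lower:
  fixes N :: "real^'n \<Rightarrow> real"
  assumes n: "is_norm N"
  shows "\<exists>d>0. \<forall>x. d * norm x \<le> N x"
proof -
  have ne: "sphere (0::real^'n) 1 \<noteq> {}"
  proof -
    obtain i :: 'n where True by simp
    have "norm (axis i (1::real) :: real^'n) = 1" by simp
    then have "axis i (1::real) \<in> sphere (0::real^'n) 1" by (simp add: dist_norm)
    then show ?thesis by blast
  qed
  obtain x0 where x0: "x0 \<in> sphere 0 1" "\<And>z. z \<in> sphere 0 1 \<Longrightarrow> N x0 \<le> N z"
    using continuous_attains_inf[OF compact_sphere ne N_cont[OF n]] by blast
  have "x0 \<noteq> 0" using x0(1) by auto
  then have d: "N x0 > 0" using N_zero[OF n, of x0] N_ge0[OF n, of x0] by linarith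
  have "N x0 * norm x \<le> N x" for x
  proof (cases "x = 0")
    case True then show ?thesis using N_ge0[OF n] by simp
  next
    case False
    have "(1 / norm x) *\<^sub>R x \<in> sphere 0 1" using False by (simp add: sphere_def dist_norm)
    then have "N x0 \<le> N ((1 / norm x) *\<^sub>R x)" by (rule x0(2))
    also have "\<dots> = N x / norm x" by (simp add: N_scale[OF n])
    finally show ?thesis using False by (simp add: field_simps)
  qed
  then show ?thesis using d by blast
qed

lemma opnorm_bound:
  fixes N :: "real^'n \<Rightarrow> real"
  assumes n: "is_norm N"
  shows "N (A *v x) \<le> opnorm N A * N x"
proof -
  obtain c where c: "c > 0" "\<And>x. N x \<le> c * norm x" using N_upper[OF n] by blast
  obtain d where d: "d > 0" "\<And>x. d * norm x \<le> N x" using N_lower[OF n] by blast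
  obtain K where K: "\<And>v. norm (A *v v) \<le> norm v * K"
    using bounded_linear.bounded[OF matrix_vector_mul_bounded_linear[of A]] by blast
  have bdd: "bdd_above {N (A *v v) | v. N v \<le> 1}"
  proof (rule bdd_aboveI[where M="c * ((1/d) * \<bar>K\<bar>)"], safe)
    fix v :: "real^'n" assume v: "N v \<le> 1"
    have "norm v \<le> 1 / d" using d(2)[of v] v d(1) by (simp add: field_simps)
    have "N (A *v v) \<le> c * (norm v * K)" using c(2)[of "A *v v"] K[of v] c(1)
      by (meson mult_left_mono less_imp_le order_trans)
    also have "\<dots> \<le> c * ((1/d) * \<bar>K\<bar>)"
      using \<open>norm v \<le> 1 / d\<close> c(1)
    proof (intro mult_left_mono)
      have "norm v * K \<le> norm v * \<bar>K\<bar>" by (simp add: mult_left_mono)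
      also have "\<dots> \<le> (1/d) * \<bar>K\<bar>" using \<open>norm v \<le> 1 / d\<close> by (rule mult_right_mono) simp
      finally show "norm v * K \<le> (1/d) * \<bar>K\<bar>" .
    qed (use c in simp)
    finally show "N (A *v v) \<le> c * ((1/d) * \<bar>K\<bar>)" .
  qed
  show ?thesis
  proof (cases "x = 0")
    case True then show ?thesis using N_zero[OF n, of 0] by simp
  next
    case False
    then have Nx: "N x > 0" using N_zero[OF n, of x] N_ge0[OF n, of x] by linarith
    define v where "v = (1 / N x) *\<^sub>R x"
    have "N v = 1" using Nx unfolding v_def by (simp add: N_scale[OF n])
    then have "N (A *v v) \<le> opnorm N A"
      unfolding opnorm_def by (intro cSup_upper[OF _ bdd]) auto
    moreover have "A *v v = (1 / N x) *\<^sub>R (A *v x)"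
      unfolding v_def by (simp add: matrix_vector_mult_scaleR)
    ultimately have "N (A *v x) / N x \<le> opnorm N A" using Nx by (simp add: N_scale[OF n])
    then show ?thesis using Nx by (simp add: field_simps)
  qed
qed

lemma N_ball_convex:
  fixes N :: "real^'n \<Rightarrow> real"
  assumes n: "is_norm N"
  shows "convex {x. N x \<le> \<rho>}"
  unfolding convex_def
proof (safe)
  fix x y :: "real^'n" and u v :: real
  assume "N x \<le> \<rho>" "N y \<le> \<rho>" "0 \<le> u" "0 \<le> v" "u + v = 1"
  then have "N (u *\<^sub>R x + v *\<^sub>R y) \<le> u * N x + v * N y"
    using N_tri[OF n, of "u *\<^sub>R x" "v *\<^sub>R y"] by (simp add: N_scale[OF n])
  also have "\<dots> \<le> u * \<rho> + v * \<rho>"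
    using \<open>N x \<le> \<rho>\<close> \<open>N y \<le> \<rho>\<close> \<open>0 \<le> u\<close> \<open>0 \<le> v\<close>
    by (intro add_mono mult_left_mono) auto
  finally show "N (u *\<^sub>R x + v *\<^sub>R y) \<le> \<rho>" using \<open>u + v = 1\<close>
    by (simp add: distrib_right[symmetric])
qed

lemma matrix_inv_right':
  fixes A :: "real^'n^'n"
  assumes "invertible A"
  shows "A ** matrix_inv A = mat 1"
  using assms unfolding invertible_def matrix_inv_def by (rule someI_ex[THEN conjunct1])

lemma err_bound:
  fixes N :: "real^'n \<Rightarrow> real"
    and g :: "real^'n \<Rightarrow> real^'n"
    and g' :: "real^'n \<Rightarrow> real^'n^'n"
  assumes n: "is_norm N"
    and cvx: "convex B"
    and deriv: "\<And>x. x \<in> B \<Longrightarrow> (g has_derivative (\<lambda>h. g' x *v h)) (at x within B)"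
    and lip: "\<And>xa xb. xa \<in> B \<Longrightarrow> xb \<in> B \<Longrightarrow> opnorm N (g' xa - g' xb) \<le> L * N (xa - xb)"
    and L: "L \<ge> 0"
  shows "\<exists>C>0. \<forall>a\<in>B. \<forall>b\<in>B. N (g b - g a - g' a *v (b - a)) \<le> C * (N (b - a))\<^sup>2"
proof -
  obtain c where c: "c > 0" "\<And>x. N x \<le> c * norm x" using N_upper[OF n] by blast
  obtain d where d: "d > 0" "\<And>x. d * norm x \<le> N x" using N_lower[OF n] by blast
  have nd: "norm x \<le> N x / d" for x using d(2)[of x] d(1) by (simp add: field_simps)
  define C where "C = c * c * L / (d * d) + 1"
  have "N (g b - g a - g' a *v (b - a)) \<le> C * (N (b - a))\<^sup>2" if ab: "a \<in> B" "b \<in> B" for a b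
  proof -
    let ?S = "closed_segment a b"
    have sub: "?S \<subseteq> B" using closed_segment_subset[OF ab cvx] .
    let ?K = "L * N (b - a) * c / d"
    have "norm (g b - g a - g' a *v (b - a)) \<le> norm (b - a) * ?K"
    proof (rule differentiable_bound_linearization[where S="?S" and f'="\<lambda>x h. g' x *v h"])
      fix t :: real assume "t \<in> {0..1}"
      then show "a + t *\<^sub>R (b - a) \<in> ?S"
        unfolding in_segment by (intro conjI exI[of _ t]) (auto simp: algebra_simps)
    next
      fix x assume "x \<in> ?S"
      then show "(g has_derivative (\<lambda>h. g' x *v h)) (at x within ?S)"
        using deriv sub by (meson has_derivative_subset subsetD)
    next
      show "a \<in> ?S" by simp
    next
      fix x assume xS: "x \<in> ?S"
      then obtain u where u: "0 \<le> u" "u \<le> 1" "x = (1 - u) *\<^sub>R a + u *\<^sub>R b"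
        unfolding in_segment by blast
      have "x - a = u *\<^sub>R (b - a)" using u(3) by (simp add: algebra_simps)
      then have Nxa: "N (x - a) \<le> N (b - a)"
        using u N_ge0[OF n, of "b - a"] by (simp add: N_scale[OF n] mult_left_le_one_le)
      have xB: "x \<in> B" using xS sub by blast
      have op: "opnorm N (g' x - g' a) \<le> L * N (b - a)"
        using lip[OF xB ab(1)] Nxa L by (meson mult_left_mono order_trans)
      show "onorm ((\<lambda>h. g' x *v h) - (\<lambda>h. g' a *v h)) \<le> ?K"
      proof (rule onorm_le)
        fix h
        have eq: "((\<lambda>h. g' x *v h) - (\<lambda>h. g' a *v h)) h = (g' x - g' a) *v h"
          by (simp add: matrix_vector_mult_diff_rdistrib)
        have "norm ((g' x - g' a) *v h) \<le> N ((g' x - g' a) *v h) / d" by (rule nd)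
        also have "\<dots> \<le> opnorm N (g' x - g' a) * N h / d"
          using opnorm_bound[OF n] d(1) by (simp add: divide_right_mono)
        also have "\<dots> \<le> (L * N (b - a)) * (c * norm h) / d"
          using op c(2)[of h] N_ge0[OF n, of h] L N_ge0[OF n, of "b - a"] d(1)
          by (intro divide_right_mono mult_mono) auto
        also have "\<dots> = ?K * norm h" by simp
        finally show "norm (((\<lambda>h. g' x *v h) - (\<lambda>h. g' a *v h)) h) \<le> ?K * norm h"
          unfolding eq .
      qed
    qed
    then have "N (g b - g a - g' a *v (b - a)) \<le> c * (norm (b - a) * ?K)"
      using c by (meson mult_left_mono less_imp_le order_trans)
    also have "\<dots> \<le> c * ((N (b - a) / d) * ?K)"
      using nd[of "b - a"] c(1) d(1) L N_ge0[OF n, of "b - a"]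
      by (intro mult_left_mono mult_right_mono) auto
    also have "\<dots> = (c * c * L / (d * d)) * (N (b - a))\<^sup>2"
      by (simp add: power2_eq_square)
    also have "\<dots> \<le> C * (N (b - a))\<^sup>2" unfolding C_def by (intro mult_right_mono) auto
    finally show ?thesis .
  qed
  moreover have "C > 0"
  proof -
    have "0 \<le> c * c * L / (d * d)" using c(1) d(1) L by simp
    then show ?thesis unfolding C_def by linarith
  qed
  ultimately show ?thesis by blast
qed

primrec nseq :: "(real^'n \<Rightarrow> real^'n) \<Rightarrow> (real^'n \<Rightarrow> real^'n^'n) \<Rightarrow> real^'n \<Rightarrow> real \<Rightarrow> nat \<Rightarrow> real^'n"
  where
    "nseq g g' y h 0 = 0"
  | "nseq g g' y h (Suc k) = nseq g g' y h k +
       matrix_inv (g' (nseq g g' y h k)) *v (h *\<^sub>R y - (g (nseq g g' y h k) - (real k * h) *\<^sub>R y))"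

lemma nseq_bound:
  fixes N :: "real^'n \<Rightarrow> real"
    and g :: "real^'n \<Rightarrow> real^'n"
    and g' :: "real^'n \<Rightarrow> real^'n^'n"
  assumes n: "is_norm N"
    and BD: "B = {x. N x \<le> \<rho>}"
    and g0: "g 0 = 0"
    and Cpos: "C > 0"
    and err: "\<forall>a\<in>B. \<forall>b\<in>B. N (g b - g a - g' a *v (b - a)) \<le> C * (N (b - a))\<^sup>2"
    and inv: "\<And>x. x \<in> B \<Longrightarrow> invertible (g' x)"
    and inv_bound: "\<And>x. x \<in> B \<Longrightarrow> opnorm N (matrix_inv (g' x)) \<le> 1 / \<mu>"
    and mu: "\<mu> > 0"
    and h: "h \<ge> 0"
    and sdef: "s = h * N y"
    and edef: "\<epsilon> = 4 * C * s\<^sup>2 / \<mu>\<^sup>2"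
    and hs: "4 * C * s \<le> \<mu>\<^sup>2"
    and hm: "real m * (s + \<epsilon>) / \<mu> \<le> \<rho>"
  shows "k \<le> m \<Longrightarrow> N (g (nseq g g' y h k) - (real k * h) *\<^sub>R y) \<le> \<epsilon>
            \<and> N (nseq g g' y h k) \<le> real k * (s + \<epsilon>) / \<mu>"
proof (induction k)
  have s0: "s \<ge> 0" using sdef h N_ge0[OF n, of y] by simp
  have e0: "\<epsilon> \<ge> 0" using edef Cpos by simp
  case 0
  then show ?case using g0 e0 N_zero[OF n, of 0] by simp
next
  case (Suc k)
  have s0: "s \<ge> 0" using sdef h N_ge0[OF n, of y] by simp
  have e0: "\<epsilon> \<ge> 0" using edef Cpos by simp
  have es: "\<epsilon> \<le> s"
  proof -
    have "\<epsilon> = s * (4 * C * s / \<mu>\<^sup>2)" using edef by (simp add: power2_eq_square)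
    also have "\<dots> \<le> s * 1" using hs mu s0 by (intro mult_left_mono) auto
    finally show ?thesis by simp
  qed
  from Suc have IH: "N (g (nseq g g' y h k) - (real k * h) *\<^sub>R y) \<le> \<epsilon>"
      "N (nseq g g' y h k) \<le> real k * (s + \<epsilon>) / \<mu>" by auto
  define x where "x = nseq g g' y h k"
  define e where "e = g x - (real k * h) *\<^sub>R y"
  define dl where "dl = matrix_inv (g' x) *v (h *\<^sub>R y - e)"
  have x1: "nseq g g' y h (Suc k) = x + dl" unfolding x_def dl_def e_def by simp
  have Ne: "N e \<le> \<epsilon>" using IH(1) unfolding e_def x_def .
  have Nx: "N x \<le> real k * (s + \<epsilon>) / \<mu>" using IH(2) unfolding x_def .
  have "real k * (s + \<epsilon>) / \<mu> \<le> real m * (s + \<epsilon>) / \<mu>"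
    using Suc.prems s0 e0 mu by (intro divide_right_mono mult_right_mono) auto
  then have xB: "x \<in> B" using Nx hm BD by simp
  have "N dl \<le> opnorm N (matrix_inv (g' x)) * N (h *\<^sub>R y - e)"
    unfolding dl_def by (rule opnorm_bound[OF n])
  also have "\<dots> \<le> (1 / \<mu>) * (s + \<epsilon>)"
  proof (rule mult_mono)
    show "opnorm N (matrix_inv (g' x)) \<le> 1 / \<mu>" using inv_bound[OF xB] .
    have "N (h *\<^sub>R y - e) \<le> N (h *\<^sub>R y) + N e" by (rule N_diff_tri[OF n])
    also have "\<dots> \<le> s + \<epsilon>" using Ne h sdef by (simp add: N_scale[OF n])
    finally show "N (h *\<^sub>R y - e) \<le> s + \<epsilon>" .
  qed (use mu N_ge0[OF n] in auto)
  finally have Ndl: "N dl \<le> (s + \<epsilon>) / \<mu>" by simp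
  have Nx1: "N (x + dl) \<le> real (Suc k) * (s + \<epsilon>) / \<mu>"
  proof -
    have "N (x + dl) \<le> N x + N dl" by (rule N_tri[OF n])
    also have "\<dots> \<le> real k * (s + \<epsilon>) / \<mu> + (s + \<epsilon>) / \<mu>" using Nx Ndl by simp
    also have "\<dots> = real (Suc k) * (s + \<epsilon>) / \<mu>" using mu by (simp add: field_simps)
    finally show ?thesis .
  qed
  have "real (Suc k) * (s + \<epsilon>) / \<mu> \<le> real m * (s + \<epsilon>) / \<mu>"
    using Suc.prems s0 e0 mu by (intro divide_right_mono mult_right_mono) auto
  then have x1B: "x + dl \<in> B" using Nx1 hm BD by simp
  have gdl: "g' x *v dl = h *\<^sub>R y - e"
    unfolding dl_def matrix_vector_mul_assoc matrix_inv_right'[OF inv[OF xB]] by simp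
  have eq: "g (x + dl) - (real (Suc k) * h) *\<^sub>R y = g (x + dl) - g x - g' x *v ((x + dl) - x)"
    using gdl unfolding e_def by (simp add: algebra_simps)
  have "N (g (x + dl) - (real (Suc k) * h) *\<^sub>R y) \<le> C * (N dl)\<^sup>2"
    unfolding eq using err xB x1B by (metis add_diff_cancel_left')
  also have "\<dots> \<le> C * ((s + \<epsilon>) / \<mu>)\<^sup>2"
    using Ndl N_ge0[OF n, of dl] Cpos by (intro mult_left_mono power_mono) auto
  also have "\<dots> \<le> C * ((2 * s) / \<mu>)\<^sup>2"
    using es s0 e0 mu Cpos by (intro mult_left_mono power_mono divide_right_mono) auto
  also have "\<dots> = \<epsilon>" unfolding edef by (simp add: power2_eq_square field_simps)
  finally show ?case using Nx1 x1 by simp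
qed

lemma div_helper:
  fixes K q m :: real
  assumes "0 < m" "0 < q" "K / q < m"
  shows "K / m \<le> q"
proof -
  have "K < m * q" using assms by (simp add: field_simps)
  then show ?thesis using assms by (simp add: field_simps)
qed

theorem corollary2:
  fixes N :: "real^'n \<Rightarrow> real"
    and g :: "real^'n \<Rightarrow> real^'n"
    and g' :: "real^'n \<Rightarrow> real^'n^'n"
    and y :: "real^'n"
    and \<rho> L \<mu> :: real
  defines "B \<equiv> {x. N x \<le> \<rho>}"
  assumes normN: "is_norm N"
    and rho_pos: "\<rho> > 0" and L_nonneg: "L \<ge> 0" and mu_pos: "\<mu> > 0"
    and g0: "g 0 = 0"
    and deriv: "\<And>x. x \<in> B \<Longrightarrow> (g has_derivative (\<lambda>h. g' x *v h)) (at x within B)"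
    and lip: "\<And>xa xb. xa \<in> B \<Longrightarrow> xb \<in> B \<Longrightarrow> opnorm N (g' xa - g' xb) \<le> L * N (xa - xb)"
    and inv: "\<And>x. x \<in> B \<Longrightarrow> invertible (g' x)"
    and inv_bound: "\<And>x. x \<in> B \<Longrightarrow> opnorm N (matrix_inv (g' x)) \<le> 1 / \<mu>"
    and y_small: "N y < \<mu> * \<rho>"
  shows "\<exists>xs. g xs = y \<and> N xs \<le> N y / \<mu>"
proof -
  have cvx: "convex B" unfolding B_def by (rule N_ball_convex[OF normN])
  obtain C where Cpos: "C > 0"
    and err: "\<forall>a\<in>B. \<forall>b\<in>B. N (g b - g a - g' a *v (b - a)) \<le> C * (N (b - a))\<^sup>2"
    using err_bound[OF normN cvx deriv lip L_nonneg] by blast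
  define Y where "Y = N y"
  define r where "r = Y / \<mu>"
  have Y0: "Y \<ge> 0" unfolding Y_def by (rule N_ge0[OF normN])
  have r\<rho>: "r < \<rho>" unfolding r_def Y_def using y_small mu_pos by (simp add: field_simps)
  define P where "P = 4 * C * Y\<^sup>2"
  have P0: "P \<ge> 0" unfolding P_def using Cpos by simp
  have approx: "\<exists>x\<in>B. N (g x - y) \<le> \<delta> \<and> N x \<le> r + \<delta>" if \<delta>: "\<delta> > 0" for \<delta>
  proof -
    define M where "M = 1 + (4 * C * Y) / \<mu>\<^sup>2 + (P / \<mu> ^ 3) / (\<rho> - r)
       + (P / \<mu>\<^sup>2) / \<delta> + (P / \<mu> ^ 3) / \<delta>"
    have t1: "0 \<le> (4 * C * Y) / \<mu>\<^sup>2" using Cpos Y0 by simp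
    have t2: "0 \<le> (P / \<mu> ^ 3) / (\<rho> - r)" using P0 mu_pos r\<rho> by simp
    have t3: "0 \<le> (P / \<mu>\<^sup>2) / \<delta>" using P0 \<delta> by simp
    have t4: "0 \<le> (P / \<mu> ^ 3) / \<delta>" using P0 mu_pos \<delta> by simp
    obtain m :: nat where mM: "M < real m" using reals_Archimedean2 by blast
    have m1: "real m \<ge> 1" using mM t1 t2 t3 t4 unfolding M_def by linarith
    have m0: "real m > 0" using m1 by linarith
    define h where "h = 1 / real m"
    define s where "s = h * N y"
    define \<epsilon> where "\<epsilon> = 4 * C * s\<^sup>2 / \<mu>\<^sup>2"
    have sm: "s = Y / real m" unfolding s_def h_def Y_def by simp
    have em: "\<epsilon> = (P / \<mu>\<^sup>2) / (real m * real m)"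
      unfolding \<epsilon>_def sm P_def by (simp add: power2_eq_square field_simps)
    have me: "real m * \<epsilon> / \<mu> = (P / \<mu> ^ 3) / real m"
      unfolding em using m0 mu_pos by (simp add: power2_eq_square power3_eq_cube field_simps)
    have hs: "4 * C * s \<le> \<mu>\<^sup>2"
    proof -
      have "(4 * C * Y) / real m \<le> \<mu>\<^sup>2"
        by (rule div_helper) (use m0 mu_pos mM t1 t2 t3 t4 in \<open>auto simp: M_def\<close>)
      then show ?thesis unfolding sm by simp
    qed
    have a2: "(P / \<mu> ^ 3) / real m \<le> \<rho> - r"
      by (rule div_helper) (use m0 r\<rho> mM t1 t2 t3 t4 in \<open>auto simp: M_def\<close>)
    have a3: "(P / \<mu> ^ 3) / real m \<le> \<delta>"
      by (rule div_helper) (use m0 \<delta> mM t1 t2 t3 t4 in \<open>auto simp: M_def\<close>)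
    have a4: "(P / \<mu>\<^sup>2) / real m \<le> \<delta>"
      by (rule div_helper) (use m0 \<delta> mM t1 t2 t3 t4 in \<open>auto simp: M_def\<close>)
    have sum_eq: "real m * (s + \<epsilon>) / \<mu> = r + (P / \<mu> ^ 3) / real m"
    proof -
      have "real m * (s + \<epsilon>) / \<mu> = real m * s / \<mu> + real m * \<epsilon> / \<mu>"
        by (simp add: algebra_simps add_divide_distrib)
      also have "real m * s / \<mu> = r" unfolding sm r_def using m0 by simp
      finally show ?thesis unfolding me .
    qed
    have hm: "real m * (s + \<epsilon>) / \<mu> \<le> \<rho>" using sum_eq a2 by simp
    have ed: "\<epsilon> \<le> \<delta>"
    proof -
      have "\<epsilon> \<le> (P / \<mu>\<^sup>2) / real m" unfolding em
        using m1 P0 m0 by (intro divide_left_mono) (auto simp: mult_le_cancel_left1)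
      then show ?thesis using a4 by simp
    qed
    have h0: "h \<ge> 0" unfolding h_def by simp
    have res: "N (g (nseq g g' y h m) - (real m * h) *\<^sub>R y) \<le> \<epsilon>
            \<and> N (nseq g g' y h m) \<le> real m * (s + \<epsilon>) / \<mu>"
      by (rule nseq_bound[where N=N and B=B and \<rho>=\<rho> and g=g and C=C and g'=g' and \<mu>=\<mu>
            and h=h and s=s and y=y and \<epsilon>=\<epsilon> and m=m and k=m])
        (fact normN, simp add: B_def, fact g0, fact Cpos, fact err, fact inv, fact inv_bound,
          fact mu_pos, fact h0, fact s_def, fact \<epsilon>_def, fact hs, fact hm, simp)
    have mh: "real m * h = 1" unfolding h_def using m0 by simp
    define x where "x = nseq g g' y h m"
    have "N (g x - y) \<le> \<delta>" using res ed mh unfolding x_def by simp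
    moreover have "N x \<le> r + \<delta>" using res sum_eq a3 unfolding x_def by simp
    moreover have "x \<in> B" using res hm unfolding x_def B_def by simp
    ultimately show ?thesis by blast
  qed
  define \<phi> where "\<phi> x = N (g x - y) + max 0 (N x - r)" for x
  have contg: "continuous_on B g" by (rule has_derivative_continuous_on[OF deriv])
  have cont: "continuous_on B \<phi>"
  proof -
    have c1: "continuous_on B (\<lambda>x. N (g x - y))"
      by (rule continuous_on_compose2[OF N_cont[OF normN, of UNIV]])
        (auto intro!: continuous_intros contg)
    have c2: "continuous_on B (\<lambda>x. max 0 (N x - r))"
      by (intro continuous_intros N_cont[OF normN])
    show ?thesis unfolding \<phi>_def by (intro continuous_intros c1 c2)
  qed
  obtain d where d: "d > 0" "\<And>x. d * norm x \<le> N x" using N_lower[OF normN] by blast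
  have compB: "compact B"
  proof (rule compact_eq_bounded_closed[THEN iffD2], rule conjI)
    show "bounded B" unfolding bounded_iff
    proof (intro exI ballI)
      fix x assume "x \<in> B"
      then have "d * norm x \<le> \<rho>" using d(2)[of x] unfolding B_def by simp
      then show "norm x \<le> \<rho> / d" using d(1) by (simp add: field_simps)
    qed
    show "closed B" unfolding B_def
      by (rule closed_Collect_le) (auto intro: N_cont[OF normN] continuous_intros)
  qed
  have "0 \<in> B" unfolding B_def using N_zero[OF normN, of 0] rho_pos by simp
  then have neB: "B \<noteq> {}" by blast
  obtain x0 where x0: "x0 \<in> B" "\<And>z. z \<in> B \<Longrightarrow> \<phi> x0 \<le> \<phi> z"
    using continuous_attains_inf[OF compB neB cont] by blast
  have small: "\<phi> x0 \<le> 2 * \<delta>" if dpos: "\<delta> > 0" for \<delta>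
  proof -
    obtain x where x: "x \<in> B" "N (g x - y) \<le> \<delta>" "N x \<le> r + \<delta>" using approx[OF dpos] by blast
    have "\<phi> x \<le> 2 * \<delta>" unfolding \<phi>_def using x dpos by simp
    then show ?thesis using x0(2)[OF x(1)] by simp
  qed
  have p1: "0 \<le> N (g x0 - y)" by (rule N_ge0[OF normN])
  have p2: "0 \<le> max 0 (N x0 - r)" by simp
  have "\<phi> x0 \<le> 0"
  proof (rule ccontr)
    assume "\<not> \<phi> x0 \<le> 0"
    then have "\<phi> x0 > 0" by simp
    then have "\<phi> x0 \<le> 2 * (\<phi> x0 / 4)" using small[of "\<phi> x0 / 4"] by simp
    then show False using \<open>\<phi> x0 > 0\<close> by simp
  qed
  then have "N (g x0 - y) = 0" "max 0 (N x0 - r) = 0" using p1 p2 unfolding \<phi>_def by linarith+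
  then have "g x0 = y" "N x0 \<le> r" using N_zero[OF normN] by auto
  then show ?thesis unfolding r_def Y_def by blast
qed

end
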